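(* Let $A$ be a synaptic algebra and let $p,q\in P$ be in generic position ($p\wedge q=p\wedge q^{\perp}=p^{\perp}\wedge q=p^{\perp}\wedge q^{\perp}=0$). Let $c:=(pqp+p^{\perp}q^{\perp}p^{\perp})^{1/2}$, let $u$ and $v$ be the symmetries of the polar decompositions of $p-q^{\perp}$ and $p-q$, respectively, and put $j:=uvp+pvu$ (so that $q=c^2p+csj+s^2p^{\perp}$ with $s:=(pq^{\perp}p+p^{\perp}qp^{\perp})^{1/2}$). Then an element $a\in A$ commutes with both $p$ and $q$ iff there exists $b\in C(c)$ such that $b=bp=pb$ and $a=b+jbj$.
   Context: Synaptic algebra (Foulis): $R$ is a real linear associative algebra with unit $1$, and $A\subseteq R$ is a real linear subspace with $1\in A$. For $a,b\in A$ write $aCb$ iff $ab=ba$; $C(a):=\{b\in A: aCb\}$; $CC(a):=\{b\in A: bCd \text{ for all } d\in C(a)\}$. $A$ is a synaptic algebra with enveloping algebra $R$ iff: (SA1) $A$ is a partially ordered archimedean real linear space with positive cone $A^+$, $1$ is an order unit, $\|\cdot\|$ the order-unit norm; (SA2) $a\in A\Rightarrow a^2\in A^+$; (SA3) $a,b\in A^+\Rightarrow aba\in A^+$; (SA4) if $a\in A$, $b\in A^+$, $aba=0$ then $ab=ba=0$; (SA5) if $a\in A^+$ there is $b\in A^+\cap CC(a)$ with $b^2=a$; (SA6) for $a\in A$ there is $p=p^2\in A$ with $ab=0\Leftrightarrow pb=0$ for all $b\in A$; (SA7) if $1\le a$ there is $b\in A$ with $ab=ba=1$; (SA8) if $a,b\in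 A$, $a_1\le a_2\le\cdots$ are pairwise commuting elements of $C(b)$ with $\|a-a_n\|\to0$, then $a\in C(b)$. $A$ is nondegenerate. Products are computed in $R$. $P:=\{p\in A:p=p^2\}$ with inherited order is an orthomodular lattice with $p^{\perp}:=1-p$, meet $\wedge$, join $\vee$. For $0\le a$, $a^{1/2}$ is its unique positive square root in $A$, $|a|:=(a^2)^{1/2}$; $a^{\circ}$ is the carrier of $a$ (the unique projection with $ab=0\Leftrightarrow a^{\circ}b=0$ for all $b\in A$). A symmetry is $u\in A$ with $u^2=1$. For $a\in A$, the signum $t$ of $a$ is the partial symmetry with $t^2=a^{\circ}$, $t\in CC(a)$, $a=|a|t=t|a|$; the symmetry of the polar decomposition of $a$ is $t+(a^{\circ})^{\perp}$. *)

theory Defs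
  imports "HOL-Analysis.Analysis"
begin

text \<open>The enveloping algebra R is the type 'a of class
real_algebra_1 (real linear associative algebra with unit); the synaptic algebra is a set
A of elements of R, and its positive cone is a set Pos.  Products are computed in R.\<close>

definition sa_le :: "'a::real_algebra_1 set \<Rightarrow> 'a \<Rightarrow> 'a \<Rightarrow> bool" where
  "sa_le Pos a b \<longleftrightarrow> b - a \<in> Pos"

definition sa_C :: "'a::real_algebra_1 set \<Rightarrow> 'a \<Rightarrow> 'a set" where
  "sa_C A a = {b \<in> A. a * b = b * a}"

definition sa_CC :: "'a::real_algebra_1 set \<Rightarrow> 'a \<Rightarrow> 'a set" where
  "sa_CC A a = {b \<in> A. \<forall>d \<in> sa_C A a. b * d = d * b}"

definition sa_norm :: "'a::real_algebra_1 set \<Rightarrow> 'a \<Rightarrow> real" where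
  "sa_norm Pos a = Inf {l. 0 \<le> l \<and> sa_le Pos (- (l *\<^sub>R 1)) a \<and> sa_le Pos a (l *\<^sub>R 1)}"

definition synaptic_algebra :: "'a::real_algebra_1 set \<Rightarrow> 'a set \<Rightarrow> bool" where
  "synaptic_algebra A Pos \<longleftrightarrow>
     subspace A \<and> 1 \<in> A \<and>
     \<comment> \<open>SA1: partially ordered archimedean real linear space, 1 an order unit\<close>
     Pos \<subseteq> A \<and> 0 \<in> Pos \<and>
     (\<forall>a\<in>Pos. \<forall>b\<in>Pos. a + b \<in> Pos) \<and>
     (\<forall>a\<in>Pos. \<forall>t::real. 0 \<le> t \<longrightarrow> t *\<^sub>R a \<in> Pos) \<and>
     (\<forall>a\<in>Pos. - a \<in> Pos \<longrightarrow> a = 0) \<and>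
     (\<forall>a\<in>A. \<forall>b\<in>A. (\<forall>n::nat. sa_le Pos (real n *\<^sub>R a) b) \<longrightarrow> sa_le Pos a 0) \<and>
     (\<forall>a\<in>A. \<exists>n::nat. sa_le Pos a (real n *\<^sub>R 1)) \<and>
     \<comment> \<open>SA2\<close>
     (\<forall>a\<in>A. a * a \<in> Pos) \<and>
     \<comment> \<open>SA3\<close>
     (\<forall>a\<in>Pos. \<forall>b\<in>Pos. a * b * a \<in> Pos) \<and>
     \<comment> \<open>SA4\<close>
     (\<forall>a\<in>A. \<forall>b\<in>Pos. a * b * a = 0 \<longrightarrow> a * b = 0 \<and> b * a = 0) \<and>
     \<comment> \<open>SA5\<close>
     (\<forall>a\<in>Pos. \<exists>b\<in>Pos. b \<in> sa_CC A a \<and> b * b = a) \<and>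
     \<comment> \<open>SA6\<close>
     (\<forall>a\<in>A. \<exists>p\<in>A. p * p = p \<and> (\<forall>b\<in>A. a * b = 0 \<longleftrightarrow> p * b = 0)) \<and>
     \<comment> \<open>SA7\<close>
     (\<forall>a\<in>A. sa_le Pos 1 a \<longrightarrow> (\<exists>b\<in>A. a * b = 1 \<and> b * a = 1)) \<and>
     \<comment> \<open>SA8\<close>
     (\<forall>a\<in>A. \<forall>b\<in>A. \<forall>x::nat \<Rightarrow> 'a.
        (\<forall>n. x n \<in> sa_C A b) \<and> (\<forall>m n. x m * x n = x n * x m) \<and>
        (\<forall>n. sa_le Pos (x n) (x (Suc n))) \<and>
        ((\<lambda>n. sa_norm Pos (a - x n)) \<longlonglongrightarrow> 0)
        \<longrightarrow> a \<in> sa_C A b)"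

definition sa_P :: "'a::real_algebra_1 set \<Rightarrow> 'a set" where
  "sa_P A = {p \<in> A. p * p = p}"

definition sa_meet :: "'a::real_algebra_1 set \<Rightarrow> 'a set \<Rightarrow> 'a \<Rightarrow> 'a \<Rightarrow> 'a" where
  "sa_meet A Pos p q = (THE r. r \<in> sa_P A \<and> sa_le Pos r p \<and> sa_le Pos r q \<and>
      (\<forall>s \<in> sa_P A. sa_le Pos s p \<and> sa_le Pos s q \<longrightarrow> sa_le Pos s r))"

definition sa_perp :: "'a::real_algebra_1 \<Rightarrow> 'a" where
  "sa_perp p = 1 - p"

definition generic_position :: "'a::real_algebra_1 set \<Rightarrow> 'a set \<Rightarrow> 'a \<Rightarrow> 'a \<Rightarrow> bool" where
  "generic_position A Pos p q \<longleftrightarrow>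
     sa_meet A Pos p q = 0 \<and> sa_meet A Pos p (sa_perp q) = 0 \<and>
     sa_meet A Pos (sa_perp p) q = 0 \<and> sa_meet A Pos (sa_perp p) (sa_perp q) = 0"

definition sa_sqrt :: "'a::real_algebra_1 set \<Rightarrow> 'a \<Rightarrow> 'a" where
  "sa_sqrt Pos a = (THE b. b \<in> Pos \<and> b * b = a)"

definition sa_abs :: "'a::real_algebra_1 set \<Rightarrow> 'a \<Rightarrow> 'a" where
  "sa_abs Pos a = sa_sqrt Pos (a * a)"

definition sa_carrier :: "'a::real_algebra_1 set \<Rightarrow> 'a \<Rightarrow> 'a" where
  "sa_carrier A a = (THE p. p \<in> sa_P A \<and> (\<forall>b\<in>A. a * b = 0 \<longleftrightarrow> p * b = 0))"

definition sa_signum :: "'a::real_algebra_1 set \<Rightarrow> 'a set \<Rightarrow> 'a \<Rightarrow> 'a" where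
  "sa_signum A Pos a = (THE t. t \<in> A \<and> t * t = sa_carrier A a \<and> t \<in> sa_CC A a \<and>
      a = sa_abs Pos a * t \<and> a = t * sa_abs Pos a)"

definition sa_polar_symmetry :: "'a::real_algebra_1 set \<Rightarrow> 'a set \<Rightarrow> 'a \<Rightarrow> 'a" where
  "sa_polar_symmetry A Pos a = sa_signum A Pos a + sa_perp (sa_carrier A a)"

end

theory Submission
  imports Defs
begin

section \<open>Basic consequences of the axioms\<close>

context
  fixes A Pos :: "'a::real_algebra_1 set"
  assumes SA: "synaptic_algebra A Pos"
begin

lemma sub: "subspace A" using conjunct1[OF SA[unfolded synaptic_algebra_def]] .
lemma oneA: "1 \<in> A" using conjunct1[OF conjunct2[OF SA[unfolded synaptic_algebra_def]]] .
lemma PosA: "x \<in> Pos \<Longrightarrow> x \<in> A" using conjunct1[OF conjunct2[OF conjunct2[OF SA[unfolded synaptic_algebra_def]]]] by blast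
lemma Pos_add: "x \<in> Pos \<Longrightarrow> y \<in> Pos \<Longrightarrow> x + y \<in> Pos"
  using conjunct1[OF conjunct2[OF conjunct2[OF conjunct2[OF conjunct2[OF SA[unfolded synaptic_algebra_def]]]]]] by blast
lemma Pos_anti: "x \<in> Pos \<Longrightarrow> - x \<in> Pos \<Longrightarrow> x = 0"
  using conjunct1[OF conjunct2[OF conjunct2[OF conjunct2[OF conjunct2[OF conjunct2[OF conjunct2[OF SA[unfolded synaptic_algebra_def]]]]]]]] by blast
lemma ou: "a \<in> A \<Longrightarrow> \<exists>n::nat. real n *\<^sub>R 1 - a \<in> Pos"
  using conjunct1[OF conjunct2[OF conjunct2[OF conjunct2[OF conjunct2[OF conjunct2[OF conjunct2[OF conjunct2[OF conjunct2[OF SA[unfolded synaptic_algebra_def]]]]]]]]]] unfolding sa_le_def by blast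
lemma sq: "a \<in> A \<Longrightarrow> a * a \<in> Pos"
  using conjunct1[OF conjunct2[OF conjunct2[OF conjunct2[OF conjunct2[OF conjunct2[OF conjunct2[OF conjunct2[OF conjunct2[OF conjunct2[OF SA[unfolded synaptic_algebra_def]]]]]]]]]]] by blast
lemma S3: "a \<in> Pos \<Longrightarrow> b \<in> Pos \<Longrightarrow> a * b * a \<in> Pos"
  using conjunct1[OF conjunct2[OF conjunct2[OF conjunct2[OF conjunct2[OF conjunct2[OF conjunct2[OF conjunct2[OF conjunct2[OF conjunct2[OF conjunct2[OF SA[unfolded synaptic_algebra_def]]]]]]]]]]]] by blast
lemma S4: "a \<in> A \<Longrightarrow> b \<in> Pos \<Longrightarrow> a * b * a = 0 \<Longrightarrow> a * b = 0 \<and> b * a = 0"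
  using conjunct1[OF conjunct2[OF conjunct2[OF conjunct2[OF conjunct2[OF conjunct2[OF conjunct2[OF conjunct2[OF conjunct2[OF conjunct2[OF conjunct2[OF conjunct2[OF SA[unfolded synaptic_algebra_def]]]]]]]]]]]]] by blast
lemma S5: "a \<in> Pos \<Longrightarrow> \<exists>b\<in>Pos. b \<in> sa_CC A a \<and> b * b = a"
  using conjunct1[OF conjunct2[OF conjunct2[OF conjunct2[OF conjunct2[OF conjunct2[OF conjunct2[OF conjunct2[OF conjunct2[OF conjunct2[OF conjunct2[OF conjunct2[OF conjunct2[OF SA[unfolded synaptic_algebra_def]]]]]]]]]]]]]] by blast
lemma S6: "a \<in> A \<Longrightarrow> \<exists>p\<in>A. p * p = p \<and> (\<forall>b\<in>A. a * b = 0 \<longleftrightarrow> p * b = 0)"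
  using conjunct1[OF conjunct2[OF conjunct2[OF conjunct2[OF conjunct2[OF conjunct2[OF conjunct2[OF conjunct2[OF conjunct2[OF conjunct2[OF conjunct2[OF conjunct2[OF conjunct2[OF conjunct2[OF SA[unfolded synaptic_algebra_def]]]]]]]]]]]]]]] by blast

lemma addA: "x \<in> A \<Longrightarrow> y \<in> A \<Longrightarrow> x + y \<in> A" using sub by (rule subspace_add)
lemma diffA: "x \<in> A \<Longrightarrow> y \<in> A \<Longrightarrow> x - y \<in> A" using sub by (rule subspace_diff)
lemma negA: "x \<in> A \<Longrightarrow> - x \<in> A" using sub by (rule subspace_neg)
lemma scaleA: "x \<in> A \<Longrightarrow> r *\<^sub>R x \<in> A" using sub by (rule subspace_mul)
lemma zeroA: "0 \<in> A" using sub by (rule subspace_0)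

lemma onePos: "1 \<in> Pos" using sq[OF oneA] by simp

lemma projPos: "p \<in> A \<Longrightarrow> p * p = p \<Longrightarrow> p \<in> Pos" using sq by metis

lemma Pos_sum0: "x \<in> Pos \<Longrightarrow> y \<in> Pos \<Longrightarrow> x + y = 0 \<Longrightarrow> x = 0"
proof -
  assume x: "x \<in> Pos" and y: "y \<in> Pos" and e: "x + y = 0"
  then have "y = - x" by (simp add: eq_neg_iff_add_eq_0 add.commute)
  with y have "- x \<in> Pos" by simp
  with x show "x = 0" by (rule Pos_anti)
qed

lemma jordanA: "x \<in> A \<Longrightarrow> y \<in> A \<Longrightarrow> x * y + y * x \<in> A"
proof -
  assume x: "x \<in> A" and y: "y \<in> A"
  have "x * y + y * x = (x + y) * (x + y) - x * x - y * y" by (simp add: algebra_simps mult_2 mult_2_right)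
  moreover have "(x + y) * (x + y) - x * x - y * y \<in> A"
    using diffA[OF diffA[OF PosA[OF sq[OF addA[OF x y]]] PosA[OF sq[OF x]]] PosA[OF sq[OF y]]] .
  ultimately show ?thesis by simp
qed

lemma commA: "x \<in> A \<Longrightarrow> y \<in> A \<Longrightarrow> x * y = y * x \<Longrightarrow> x * y \<in> A"
proof -
  assume x: "x \<in> A" and y: "y \<in> A" and c: "x * y = y * x"
  have "x * y = (1/2) *\<^sub>R (x * y + y * x)" using c by (simp add: scaleR_2[symmetric])
  then show ?thesis using jordanA[OF x y] scaleA by metis
qed

lemma sandA: "x \<in> Pos \<Longrightarrow> a \<in> A \<Longrightarrow> x * a * x \<in> A"
proof -
  assume x: "x \<in> Pos" and a: "a \<in> A"
  obtain n :: nat where n: "real n *\<^sub>R 1 - (- a) \<in> Pos" using ou[OF negA[OF a]] by blast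
  have "x * (real n *\<^sub>R 1 - (- a)) * x \<in> Pos" using S3[OF x n] .
  moreover have "x * (real n *\<^sub>R 1 - (- a)) * x = real n *\<^sub>R (x * x) + x * a * x"
    by (simp add: algebra_simps mult_2 mult_2_right)
  ultimately have "real n *\<^sub>R (x * x) + x * a * x \<in> A" using PosA by simp
  then have "real n *\<^sub>R (x * x) + x * a * x - real n *\<^sub>R (x * x) \<in> A"
    using scaleA[OF PosA[OF sq[OF PosA[OF x]]]] diffA by blast
  then show ?thesis by simp
qed

lemma proj_ann: "e \<in> Pos \<Longrightarrow> b \<in> A \<Longrightarrow> e * b = 0 \<or> b * e = 0 \<Longrightarrow> e * b = 0 \<and> b * e = 0"
proof -
  assume e: "e \<in> Pos" and b: "b \<in> A" and h: "e * b = 0 \<or> b * e = 0"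
  have "b * e * b = 0" using h by (metis mult.assoc mult_zero_left mult_zero_right)
  then show ?thesis using S4[OF b e] by blast
qed


lemma wbw_Pos: "w \<in> A \<Longrightarrow> b \<in> Pos \<Longrightarrow> w * b = b * w \<Longrightarrow> w * b * w \<in> Pos"
proof -
  assume w: "w \<in> A" and b: "b \<in> Pos" and c: "w * b = b * w"
  obtain h where h: "h \<in> Pos" "h \<in> sa_CC A b" "h * h = b" using S5[OF b] by blast
  have "w \<in> sa_C A b" using w c unfolding sa_C_def by simp
  then have hw: "h * w = w * h" using h(2) unfolding sa_CC_def by blast
  have "w * b * w = w * (h * h) * w" using h(3) by simp
  also have "\<dots> = (w * h) * (h * w)" by (simp add: mult.assoc)
  also have "\<dots> = (h * w) * (w * h)" using hw by simp
  also have "\<dots> = h * (w * w) * h" by (simp add: mult.assoc)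
  finally show ?thesis using S3[OF h(1) sq[OF w]] by simp
qed

lemma sqrt_unique:
  assumes a: "a \<in> Pos" and b: "b \<in> Pos" "b * b = a" and r: "r \<in> Pos" "r \<in> sa_CC A a" "r * r = a"
  shows "b = r"
proof -
  have bA: "b \<in> A" and rA: "r \<in> A" using b r PosA by auto
  have "b \<in> sa_C A a" using bA b(2) unfolding sa_C_def by (auto simp: mult.assoc)
  then have rb: "r * b = b * r" using r(2) unfolding sa_CC_def by blast
  define w where "w = b - r"
  have wA: "w \<in> A" using bA rA diffA w_def by simp
  have wb: "w * b = b * w" unfolding w_def using rb by (simp add: algebra_simps mult_2 mult_2_right)
  have wr: "w * r = r * w" unfolding w_def using rb by (simp add: algebra_simps mult_2 mult_2_right)
  have P1: "w * b * w \<in> Pos" using wbw_Pos[OF wA b(1) wb] .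
  have P2: "w * r * w \<in> Pos" using wbw_Pos[OF wA r(1) wr] .
  have "w * b * w + w * r * w = (b - r) * (b + r) * w" unfolding w_def by (simp add: algebra_simps mult_2 mult_2_right)
  also have "(b - r) * (b + r) = 0" using rb b(2) r(3) by (simp add: algebra_simps mult_2 mult_2_right)
  finally have "w * b * w + w * r * w = 0" by simp
  then have z1: "w * b * w = 0" and z2: "w * r * w = 0"
    using Pos_sum0[OF P1 P2] Pos_sum0[OF P2 P1] by (auto simp: add.commute)
  have "w * b = 0" using S4[OF wA b(1) z1] by blast
  moreover have "w * r = 0" using S4[OF wA r(1) z2] by blast
  ultimately have "w * w = 0" unfolding w_def by (simp add: algebra_simps mult_2 mult_2_right)
  then have "w * 1 * w = 0" by simp
  then have "w * 1 = 0" using S4[OF wA onePos] by blast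
  then show ?thesis unfolding w_def by simp
qed

lemma sqrt_props:
  assumes a: "a \<in> Pos"
  shows "sa_sqrt Pos a \<in> Pos \<and> sa_sqrt Pos a * sa_sqrt Pos a = a \<and> sa_sqrt Pos a \<in> sa_CC A a"
proof -
  obtain r where r: "r \<in> Pos" "r \<in> sa_CC A a" "r * r = a" using S5[OF a] by blast
  have "sa_sqrt Pos a = r" unfolding sa_sqrt_def
  proof (rule the_equality)
    show "r \<in> Pos \<and> r * r = a" using r by simp
    fix b assume "b \<in> Pos \<and> b * b = a"
    then show "b = r" using sqrt_unique[OF a _ _ r] by blast
  qed
  then show ?thesis using r by simp
qed

definition NNz :: "'a \<Rightarrow> bool" where "NNz w \<longleftrightarrow> (\<forall>b\<in>A. w * b = 0 \<longrightarrow> b = 0)"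

lemma carrier_one:
  assumes x: "x \<in> A" and n: "NNz x"
  shows "sa_carrier A x = 1"
  unfolding sa_carrier_def
proof (rule the_equality)
  show "1 \<in> sa_P A \<and> (\<forall>b\<in>A. x * b = 0 \<longleftrightarrow> 1 * b = 0)"
    using oneA n unfolding sa_P_def NNz_def by auto
  fix e assume e: "e \<in> sa_P A \<and> (\<forall>b\<in>A. x * b = 0 \<longleftrightarrow> e * b = 0)"
  have eA: "e \<in> A" "e * e = e" using e unfolding sa_P_def by auto
  have m: "1 - e \<in> A" using diffA[OF oneA eA(1)] .
  have "e * (1 - e) = 0" using eA by (simp add: algebra_simps mult_2 mult_2_right)
  then have "x * (1 - e) = 0" using e m by blast
  then have "1 - e = 0" using n m unfolding NNz_def by blast
  then show "e = 1" by simp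
qed

lemma le_proj1:
  assumes r: "r \<in> A" "r * r = r" and p: "p \<in> A" "p * p = p" and rp: "r * p = r"
  shows "sa_le Pos r p"
proof -
  have rP: "r \<in> Pos" using projPos r by blast
  have pp: "1 - p \<in> Pos" using projPos[OF diffA[OF oneA p(1)]] p(2) by (simp add: algebra_simps mult_2 mult_2_right)
  have "r * (1 - p) = 0" using rp by (simp add: algebra_simps mult_2 mult_2_right)
  then have "(1 - p) * r = 0" using proj_ann[OF pp r(1)] by blast
  then have pr: "p * r = r" by (simp add: algebra_simps mult_2 mult_2_right)
  have "(p - r) * (p - r) = p - r" using pr rp r(2) p(2) by (simp add: algebra_simps mult_2 mult_2_right)
  then have "p - r \<in> Pos" using sq[OF diffA[OF p(1) r(1)]] by simp
  then show ?thesis unfolding sa_le_def .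
qed

lemma le_proj2:
  assumes r: "r \<in> A" "r * r = r" and p: "p \<in> A" "p * p = p" and le: "sa_le Pos r p"
  shows "r * p = r"
proof -
  have rP: "r \<in> Pos" using projPos r by blast
  have pA: "1 - p \<in> A" using diffA[OF oneA p(1)] .
  have pp: "1 - p \<in> Pos" using projPos[OF pA] p(2) by (simp add: algebra_simps mult_2 mult_2_right)
  have "(1 - p) * (p - r) * (1 - p) \<in> Pos" using S3[OF pp] le unfolding sa_le_def by blast
  moreover have "(1 - p) * (p - r) * (1 - p) = - ((1 - p) * r * (1 - p))"
    using p(2) by (simp add: algebra_simps mult_2 mult_2_right)
  ultimately have "- ((1 - p) * r * (1 - p)) \<in> Pos" by simp
  then have "(1 - p) * r * (1 - p) = 0" using Pos_anti S3[OF pp rP] by blast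
  then have "(1 - p) * r = 0" using S4[OF pA rP] by blast
  then have "r * (1 - p) = 0" using proj_ann[OF rP pA] by blast
  then show ?thesis by (simp add: algebra_simps mult_2 mult_2_right)
qed

lemma meet_NN:
  assumes p: "p \<in> sa_P A" and q: "q \<in> sa_P A" and m0: "sa_meet A Pos p q = 0"
  shows "NNz ((1 - p) + (1 - q))"
proof -
  have pA: "p \<in> A" "p * p = p" and qA: "q \<in> A" "q * q = q" using p q unfolding sa_P_def by auto
  define w where "w = (1 - p) + (1 - q)"
  have p'A: "1 - p \<in> A" and q'A: "1 - q \<in> A" using diffA oneA pA qA by auto
  have p'P: "1 - p \<in> Pos" using projPos[OF p'A] pA(2) by (simp add: algebra_simps mult_2 mult_2_right)
  have q'P: "1 - q \<in> Pos" using projPos[OF q'A] qA(2) by (simp add: algebra_simps mult_2 mult_2_right)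
  have wA: "w \<in> A" unfolding w_def using addA p'A q'A by blast
  obtain e where e: "e \<in> A" "e * e = e" "\<forall>b\<in>A. w * b = 0 \<longleftrightarrow> e * b = 0" using S6[OF wA] by blast
  define m where "m = 1 - e"
  have mA: "m \<in> A" unfolding m_def using diffA oneA e by blast
  have mm: "m * m = m" unfolding m_def using e(2) by (simp add: algebra_simps mult_2 mult_2_right)
  have mP: "m \<in> Pos" using projPos[OF mA mm] .
  have eP: "e \<in> Pos" using projPos e by blast
  have em: "e * m = 0" unfolding m_def using e(2) by (simp add: algebra_simps mult_2 mult_2_right)
  then have wm: "w * m = 0" using e(3) mA by blast
  have "m * (1 - p) * m + m * (1 - q) * m = m * (w * m)" unfolding w_def by (simp only: distrib_left distrib_right mult.assoc)
  then have "m * (1 - p) * m + m * (1 - q) * m = 0" using wm by simp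
  then have z1: "m * (1 - p) * m = 0" and z2: "m * (1 - q) * m = 0"
    using Pos_sum0[OF S3[OF mP p'P] S3[OF mP q'P]] Pos_sum0[OF S3[OF mP q'P] S3[OF mP p'P]]
    by (auto simp: add.commute)
  have "m * (1 - p) = 0" using S4[OF mA p'P z1] by blast
  then have mp: "m * p = m" by (simp add: algebra_simps mult_2 mult_2_right)
  have "m * (1 - q) = 0" using S4[OF mA q'P z2] by blast
  then have mq: "m * q = m" by (simp add: algebra_simps mult_2 mult_2_right)
  have maxl: "sa_le Pos s m" if s: "s \<in> sa_P A" "sa_le Pos s p" "sa_le Pos s q" for s
  proof -
    have sA: "s \<in> A" "s * s = s" using s unfolding sa_P_def by auto
    have sP: "s \<in> Pos" using projPos sA by blast
    have "s * p = s" using le_proj2[OF sA pA s(2)] .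
    moreover have "s * q = s" using le_proj2[OF sA qA s(3)] .
    ultimately have "s * w = 0" unfolding w_def by (simp add: algebra_simps mult_2 mult_2_right)
    then have "w * s = 0" using proj_ann[OF sP wA] by blast
    then have "e * s = 0" using e(3) sA by blast
    then have "s * e = 0" using proj_ann[OF eP sA(1)] by blast
    then have "s * m = s" unfolding m_def by (simp add: algebra_simps mult_2 mult_2_right)
    then show ?thesis using le_proj1[OF sA mA mm] by blast
  qed
  have "sa_meet A Pos p q = m" unfolding sa_meet_def
  proof (rule the_equality)
    show "m \<in> sa_P A \<and> sa_le Pos m p \<and> sa_le Pos m q \<and>
      (\<forall>s\<in>sa_P A. sa_le Pos s p \<and> sa_le Pos s q \<longrightarrow> sa_le Pos s m)"
      using mA mm le_proj1[OF mA mm pA mp] le_proj1[OF mA mm qA mq] maxl unfolding sa_P_def by blast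
    fix r assume r: "r \<in> sa_P A \<and> sa_le Pos r p \<and> sa_le Pos r q \<and>
      (\<forall>s\<in>sa_P A. sa_le Pos s p \<and> sa_le Pos s q \<longrightarrow> sa_le Pos s r)"
    have "sa_le Pos m r" using r mA mm le_proj1[OF mA mm pA mp] le_proj1[OF mA mm qA mq]
      unfolding sa_P_def by blast
    moreover have "sa_le Pos r m" using r maxl by blast
    ultimately have "r - m \<in> Pos" "- (r - m) \<in> Pos" unfolding sa_le_def by auto
    then show "r = m" using Pos_anti by force
  qed
  then have "m = 0" using m0 by simp
  then have e1: "e = 1" unfolding m_def by simp
  show ?thesis unfolding NNz_def w_def[symmetric] using e(3) e1 by simp
qed


lemma NN_sq:
  assumes pA: "p \<in> A" "p * p = p" and qA: "q \<in> A" "q * q = q"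
    and n1: "NNz ((1 - p) + (1 - q))" and n2: "NNz (p + q)"
  shows "NNz ((p - q) * (p - q))"
proof -
  define X2 where "X2 = (p - q) * (p - q)"
  have p'A: "1 - p \<in> A" and q'A: "1 - q \<in> A" using diffA oneA pA qA by auto
  have pP: "p \<in> Pos" and qP: "q \<in> Pos" using projPos pA qA by auto
  have p'P: "1 - p \<in> Pos" using projPos[OF p'A] pA(2) by (simp add: algebra_simps mult_2 mult_2_right)
  have q'P: "1 - q \<in> Pos" using projPos[OF q'A] qA(2) by (simp add: algebra_simps mult_2 mult_2_right)
  have X2A: "X2 \<in> A" unfolding X2_def using PosA[OF sq[OF diffA[OF pA(1) qA(1)]]] .
  obtain e where e: "e \<in> A" "e * e = e" "\<forall>b\<in>A. X2 * b = 0 \<longleftrightarrow> e * b = 0" using S6[OF X2A] by blast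
  define k where "k = 1 - e"
  have kA: "k \<in> A" unfolding k_def using diffA oneA e by blast
  have kk: "k * k = k" unfolding k_def using e(2) by (simp add: algebra_simps mult_2 mult_2_right)
  have kP: "k \<in> Pos" using projPos[OF kA kk] .
  have "e * k = 0" unfolding k_def using e(2) by (simp add: algebra_simps mult_2 mult_2_right)
  then have X2k: "X2 * k = 0" using e(3) kA by blast
  define T1 where "T1 = p * (1 - q) * p"
  define T2 where "T2 = (1 - p) * q * (1 - p)"
  have T1P: "T1 \<in> Pos" unfolding T1_def using S3[OF pP q'P] .
  have T2P: "T2 \<in> Pos" unfolding T2_def using S3[OF p'P qP] .
  have X2e: "X2 = T1 + T2" unfolding X2_def T1_def T2_def using pA(2) qA(2)
    by (simp add: algebra_simps mult_2 mult_2_right)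
  have "k * T1 * k + k * T2 * k = k * (X2 * k)" unfolding X2e
    by (simp only: distrib_left distrib_right mult.assoc)
  then have "k * T1 * k + k * T2 * k = 0" using X2k by simp
  then have z1: "k * T1 * k = 0" and z2: "k * T2 * k = 0"
    using Pos_sum0[OF S3[OF kP T1P] S3[OF kP T2P]] Pos_sum0[OF S3[OF kP T2P] S3[OF kP T1P]]
    by (auto simp: add.commute)
  have kT1: "k * T1 = 0" using S4[OF kA T1P z1] by blast
  have kT2: "k * T2 = 0" using S4[OF kA T2P z2] by blast
  define y1 where "y1 = p * k * p"
  have y1P: "y1 \<in> Pos" unfolding y1_def using S3[OF pP kP] .
  have "y1 * (1 - q) * y1 = p * (k * T1) * k * p" unfolding y1_def T1_def by (simp add: mult.assoc)
  then have "y1 * (1 - q) * y1 = 0" using kT1 by simp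
  then have "(1 - q) * y1 = 0" using S4[OF PosA[OF y1P] q'P] by blast
  moreover have "(1 - p) * y1 = 0" unfolding y1_def using pA(2)
    by (simp add: algebra_simps mult_2 mult_2_right flip: mult.assoc)
  ultimately have "((1 - p) + (1 - q)) * y1 = 0" by (simp add: distrib_right)
  then have "y1 = 0" using n1 PosA[OF y1P] unfolding NNz_def by blast
  then have pk: "p * k = 0" using S4[OF pA(1) kP] unfolding y1_def by blast
  define y2 where "y2 = (1 - p) * k * (1 - p)"
  have y2P: "y2 \<in> Pos" unfolding y2_def using S3[OF p'P kP] .
  have "y2 * q * y2 = (1 - p) * (k * T2) * k * (1 - p)" unfolding y2_def T2_def by (simp add: mult.assoc)
  then have "y2 * q * y2 = 0" using kT2 by simp
  then have "q * y2 = 0" using S4[OF PosA[OF y2P] qP] by blast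
  moreover have "p * y2 = 0" unfolding y2_def using pA(2)
    by (simp add: algebra_simps mult_2 mult_2_right flip: mult.assoc)
  ultimately have "(p + q) * y2 = 0" by (simp add: distrib_right)
  then have "y2 = 0" using n2 PosA[OF y2P] unfolding NNz_def by blast
  then have p'k: "(1 - p) * k = 0" using S4[OF p'A kP] unfolding y2_def by blast
  have "k = p * k + (1 - p) * k" by (simp add: algebra_simps)
  then have "k = 0" using pk p'k by simp
  then have "e = 1" unfolding k_def by simp
  then show ?thesis unfolding NNz_def X2_def[symmetric] using e(3) by simp
qed


lemma polar_sym:
  assumes X: "X \<in> A" and n: "NNz (X * X)"
  defines "s \<equiv> sa_sqrt Pos (X * X)"
  shows "sa_polar_symmetry A Pos X \<in> A \<and>
         sa_polar_symmetry A Pos X * sa_polar_symmetry A Pos X = 1 \<and>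
         sa_polar_symmetry A Pos X \<in> sa_CC A X \<and>
         X = s * sa_polar_symmetry A Pos X \<and> X = sa_polar_symmetry A Pos X * s"
proof -
  have sp: "s \<in> Pos" "s * s = X * X" "s \<in> sa_CC A (X * X)"
    using sqrt_props[OF sq[OF X]] unfolding s_def by auto
  have sA: "s \<in> A" using PosA sp by blast
  have "X \<in> sa_C A (X * X)" using X unfolding sa_C_def by (simp add: mult.assoc)
  then have sX: "s * X = X * s" using sp(3) unfolding sa_CC_def by blast
  have nX: "NNz X" unfolding NNz_def
  proof (intro ballI impI)
    fix b assume b: "b \<in> A" "X * b = 0"
    then have "X * X * b = 0" by (simp add: mult.assoc)
    then show "b = 0" using n b unfolding NNz_def by blast
  qed
  have car: "sa_carrier A X = 1" using carrier_one[OF X nX] .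
  have abs: "sa_abs Pos X = s" unfolding sa_abs_def s_def ..
  define w where "w = s + X"
  have wA: "w \<in> A" unfolding w_def using addA sA X by blast
  obtain e where e: "e \<in> A" "e * e = e" "\<forall>b\<in>A. w * b = 0 \<longleftrightarrow> e * b = 0" using S6[OF wA] by blast
  have eP: "e \<in> Pos" using projPos e by blast
  have e'A: "1 - e \<in> A" using diffA oneA e by blast
  have e'P: "1 - e \<in> Pos" using projPos[OF e'A] e(2) by (simp add: algebra_simps mult_2 mult_2_right)
  have "e * (1 - e) = 0" using e(2) by (simp add: algebra_simps mult_2 mult_2_right)
  then have "w * (1 - e) = 0" using e(3) e'A by blast
  then have we: "w * e = w" by (simp add: algebra_simps)
  have "(1 - e) * w = 0" using proj_ann[OF e'P wA] \<open>w * (1 - e) = 0\<close> by blast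
  then have ew: "e * w = w" by (simp add: algebra_simps)
  have "w * (s - X) = 0" unfolding w_def using sX sp(2) by (simp add: algebra_simps)
  then have esX: "e * (s - X) = 0" using e(3) diffA[OF sA X] by blast
  then have sXe: "(s - X) * e = 0" using proj_ann[OF eP diffA[OF sA X]] by blast
  define t where "t = e + e - 1"
  have tA: "t \<in> A" unfolding t_def using addA diffA oneA e by blast
  have tt: "t * t = 1" unfolding t_def using e(2) by (simp add: algebra_simps mult_2 mult_2_right)
  have Xst: "X = s * t" unfolding t_def using we sXe unfolding w_def
    by (simp add: algebra_simps mult_2 mult_2_right)
  have Xts: "X = t * s" unfolding t_def using ew esX unfolding w_def
    by (simp add: algebra_simps mult_2 mult_2_right)
  have tCC: "t \<in> sa_CC A X" unfolding sa_CC_def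
  proof (intro CollectI conjI ballI tA)
    fix d assume d: "d \<in> sa_C A X"
    have dA: "d \<in> A" and dX: "X * d = d * X" using d unfolding sa_C_def by auto
    have "X * X * d = d * (X * X)" using dX by (metis mult.assoc)
    then have "d \<in> sa_C A (X * X)" using dA unfolding sa_C_def by simp
    then have sd: "s * d = d * s" using sp(3) unfolding sa_CC_def by blast
    have wd: "w * d = d * w" unfolding w_def using sd dX by (simp add: algebra_simps)
    define b where "b = (e * d + d * e) - (e * d * e + e * d * e)"
    have bA: "b \<in> A" unfolding b_def using diffA[OF jordanA[OF e(1) dA] addA[OF sandA[OF eP dA] sandA[OF eP dA]]] .
    have we': "w * (e * x) = w * x" for x using we by (simp flip: mult.assoc)
    have wd': "w * (d * x) = d * (w * x)" for x using wd by (simp flip: mult.assoc)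
    have "w * b = w * d - d * w" unfolding b_def
      by (simp add: algebra_simps mult_2 mult_2_right we' wd' we mult.assoc)
    then have "w * b = 0" using wd by simp
    then have eb: "e * b = 0" using e(3) bA by blast
    then have be: "b * e = 0" using proj_ann[OF eP bA] by blast
    have ee': "e * (e * x) = e * x" for x using e(2) by (simp flip: mult.assoc)
    have "e * b = e * d - e * d * e" unfolding b_def
      by (simp add: algebra_simps mult_2 mult_2_right ee' e(2))
    then have ed: "e * d = e * d * e" using eb by simp
    have "b * e = d * e - e * d * e" unfolding b_def
      by (simp add: algebra_simps mult_2 mult_2_right ee' e(2))
    then have de: "d * e = e * d * e" using be by simp
    have ed2: "e * d = d * e" using ed de by simp
    show "t * d = d * t" unfolding t_def by (simp add: algebra_simps ed2)
  qed
  have Q: "(THE t. t \<in> A \<and> t * t = sa_carrier A X \<and> t \<in> sa_CC A X \<and>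
      X = sa_abs Pos X * t \<and> X = t * sa_abs Pos X) = t"
  proof (rule the_equality)
    show "t \<in> A \<and> t * t = sa_carrier A X \<and> t \<in> sa_CC A X \<and> X = sa_abs Pos X * t \<and> X = t * sa_abs Pos X"
      using tA tt car tCC Xst Xts abs by simp
    fix t' assume t': "t' \<in> A \<and> t' * t' = sa_carrier A X \<and> t' \<in> sa_CC A X \<and> X = sa_abs Pos X * t' \<and> X = t' * sa_abs Pos X"
    then have "s * (t' - t) = 0" using Xst abs by (simp add: algebra_simps)
    then have "X * X * (t' - t) = 0" using sp(2) by (metis mult.assoc mult_zero_right)
    then have "t' - t = 0" using n diffA t' tA unfolding NNz_def by blast
    then show "t' = t" by simp
  qed
  have "sa_polar_symmetry A Pos X = t"
    unfolding sa_polar_symmetry_def sa_signum_def sa_perp_def using Q car by simp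
  then show ?thesis using tA tt tCC Xst Xts by simp
qed

end


section \<open>Pure ring computations\<close>

lemma cancel2: "(x::'a::real_algebra_1) + x = y + y \<Longrightarrow> x = y"
proof -
  assume h: "x + x = y + y"
  have "(2::real) *\<^sub>R x = (2::real) *\<^sub>R y" using h by (simp add: scaleR_2)
  then show ?thesis by simp
qed

lemma lcomm: "(x::'a::semigroup_mult) * y = y' * x' \<Longrightarrow> x * (y * z) = y' * (x' * z)"
  by (metis mult.assoc)

lemma cm_mult: "(a::'a::semigroup_mult) * x = x * a \<Longrightarrow> a * y = y * a \<Longrightarrow> a * (x * y) = (x * y) * a"
  by (metis mult.assoc)
lemma cm_add: "(a::'a::ring) * x = x * a \<Longrightarrow> a * y = y * a \<Longrightarrow> a * (x + y) = (x + y) * a"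
  by (simp add: algebra_simps)
lemma cm_diff: "(a::'a::ring) * x = x * a \<Longrightarrow> a * y = y * a \<Longrightarrow> a * (x - y) = (x - y) * a"
  by (simp add: algebra_simps)
lemma cm_one: "(a::'a::ring_1) * 1 = 1 * a" by simp

lemma ring_core:
  fixes s c u v :: "'a::real_algebra_1"
  assumes cc: "c * c = 1 - s * s" and uu: "u * u = 1" and vv: "v * v = 1"
    and anti: "v * u = - (u * v)" and cs: "c * s = s * c" and us: "u * s = s * u" and vs: "v * s = s * v"
    and uc: "u * c = c * u" and vc: "v * c = c * v"
  shows "u * v * (1 + s * v + c * u) + (1 + s * v + c * u) * v * u = (s * u - c * v) + (s * u - c * v)"
    and "(s * u - c * v) * (s * u - c * v) = 1"
    and "(s * u - c * v) * (s * v + c * u) = - ((s * v + c * u) * (s * u - c * v))"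
    and "u = s * (s * u - c * v) + c * (s * v + c * u)"
    and "v = s * (s * v + c * u) - c * (s * u - c * v)"
proof -
  have cc': "c * (c * z) = z - s * (s * z)" for z
  proof -
    have "c * (c * z) = (c * c) * z" by (simp add: mult.assoc)
    also have "\<dots> = z - s * (s * z)" unfolding cc by (simp add: algebra_simps)
    finally show ?thesis .
  qed
  have uu': "u * (u * z) = z" for z using uu by (simp flip: mult.assoc)
  have vv': "v * (v * z) = z" for z using vv by (simp flip: mult.assoc)
  have anti': "v * (u * z) = - (u * (v * z))" for z using anti by (simp flip: mult.assoc)
  have cs': "c * (s * z) = s * (c * z)" for z using lcomm[OF cs] .
  have us': "u * (s * z) = s * (u * z)" for z using lcomm[OF us] .
  have vs': "v * (s * z) = s * (v * z)" for z using lcomm[OF vs] .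
  have uc': "u * (c * z) = c * (u * z)" for z using lcomm[OF uc] .
  have vc': "v * (c * z) = c * (v * z)" for z using lcomm[OF vc] .
  note R = cc cc' uu uu' vv vv' anti anti' cs cs' us us' vs vs' uc uc' vc vc'
  show "u * v * (1 + s * v + c * u) + (1 + s * v + c * u) * v * u = (s * u - c * v) + (s * u - c * v)"
    by (simp add: algebra_simps R)
  show "(s * u - c * v) * (s * u - c * v) = 1"
    by (simp add: algebra_simps R)
  show "(s * u - c * v) * (s * v + c * u) = - ((s * v + c * u) * (s * u - c * v))"
    by (simp add: algebra_simps R)
  show "u = s * (s * u - c * v) + c * (s * v + c * u)"
    by (simp add: algebra_simps R)
  show "v = s * (s * v + c * u) - c * (s * u - c * v)"
    by (simp add: algebra_simps R)
qed


lemma CC_use: "z \<in> sa_CC A w \<Longrightarrow> d \<in> A \<Longrightarrow> d * w = w * d \<Longrightarrow> z * d = d * z"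
  unfolding sa_CC_def sa_C_def by auto

theorem theorem8p4:
  fixes A Pos :: "'a::real_algebra_1 set" and p q a :: 'a
  assumes "synaptic_algebra A Pos"
    and "p \<in> sa_P A" and "q \<in> sa_P A"
    and "generic_position A Pos p q"
    and "a \<in> A"
  shows "let c = sa_sqrt Pos (p * q * p + sa_perp p * sa_perp q * sa_perp p);
             u = sa_polar_symmetry A Pos (p - sa_perp q);
             v = sa_polar_symmetry A Pos (p - q);
             j = u * v * p + p * v * u
         in (a * p = p * a \<and> a * q = q * a) \<longleftrightarrow>
            (\<exists>b \<in> sa_C A c. b = b * p \<and> b = p * b \<and> a = b + j * b * j)"
proof -
  note SA = assms(1)
  have pA: "p \<in> A" "p * p = p" and qA: "q \<in> A" "q * q = q" using assms(2,3) unfolding sa_P_def by auto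
  have aA: "a \<in> A" by fact
  have p'P: "1 - p \<in> sa_P A" using diffA[OF SA oneA[OF SA] pA(1)] pA(2)
    unfolding sa_P_def by (simp add: algebra_simps mult_2 mult_2_right)
  have q'P: "1 - q \<in> sa_P A" using diffA[OF SA oneA[OF SA] qA(1)] qA(2)
    unfolding sa_P_def by (simp add: algebra_simps mult_2 mult_2_right)
  have g: "sa_meet A Pos p q = 0" "sa_meet A Pos p (1 - q) = 0"
      "sa_meet A Pos (1 - p) q = 0" "sa_meet A Pos (1 - p) (1 - q) = 0"
    using assms(4) unfolding generic_position_def sa_perp_def by auto
  have n1: "NNz A ((1 - p) + (1 - q))" using meet_NN[OF SA assms(2,3) g(1)] .
  have n2: "NNz A ((1 - p) + q)" using meet_NN[OF SA assms(2) q'P g(2)] by simp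
  have n3: "NNz A (p + (1 - q))" using meet_NN[OF SA p'P assms(3) g(3)] by simp
  have n4: "NNz A (p + q)" using meet_NN[OF SA p'P q'P g(4)] by simp
  define X where "X = p - q"
  define Y where "Y = p - (1 - q)"
  have XA: "X \<in> A" unfolding X_def using diffA[OF SA pA(1) qA(1)] .
  have YA: "Y \<in> A" unfolding Y_def using diffA[OF SA pA(1) diffA[OF SA oneA[OF SA] qA(1)]] .
  have q'A: "1 - q \<in> A" "(1 - q) * (1 - q) = 1 - q" using q'P unfolding sa_P_def by auto
  have nX: "NNz A (X * X)" unfolding X_def using NN_sq[OF SA pA qA n1 n4] .
  have nY: "NNz A (Y * Y)" unfolding Y_def using NN_sq[OF SA pA q'A] n2 n3 by simp
  define s where "s = sa_sqrt Pos (X * X)"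
  define c where "c = sa_sqrt Pos (Y * Y)"
  define u where "u = sa_polar_symmetry A Pos Y"
  define v where "v = sa_polar_symmetry A Pos X"
  define j where "j = u * v * p + p * v * u"
  have cdef: "sa_sqrt Pos (p * q * p + sa_perp p * sa_perp q * sa_perp p) = c"
  proof -
    have "p * q * p + sa_perp p * sa_perp q * sa_perp p = Y * Y"
      unfolding sa_perp_def Y_def using pA(2) qA(2) by (simp add: algebra_simps mult_2 mult_2_right)
    then show ?thesis unfolding c_def by simp
  qed
  have udef: "sa_polar_symmetry A Pos (p - sa_perp q) = u" unfolding u_def Y_def sa_perp_def ..
  have vdef: "sa_polar_symmetry A Pos (p - q) = v" unfolding v_def X_def ..
  have sp: "s \<in> Pos" "s * s = X * X" "s \<in> sa_CC A (X * X)"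
    using sqrt_props[OF SA sq[OF SA XA]] unfolding s_def by auto
  have cp: "c \<in> Pos" "c * c = Y * Y" "c \<in> sa_CC A (Y * Y)"
    using sqrt_props[OF SA sq[OF SA YA]] unfolding c_def by auto
  have sA: "s \<in> A" and cA: "c \<in> A" using PosA[OF SA] sp cp by auto
  have vp: "v \<in> A" "v * v = 1" "v \<in> sa_CC A X" "X = s * v" "X = v * s"
    using polar_sym[OF SA XA nX] unfolding v_def s_def by auto
  have up: "u \<in> A" "u * u = 1" "u \<in> sa_CC A Y" "Y = c * u" "Y = u * c"
    using polar_sym[OF SA YA nY] unfolding u_def c_def by auto
  have XY1: "X * X + Y * Y = 1" unfolding X_def Y_def using pA(2) qA(2)
    by (simp add: algebra_simps mult_2 mult_2_right)
  have XYanti: "X * Y = - (Y * X)" unfolding X_def Y_def using pA(2) qA(2)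
    by (simp add: algebra_simps mult_2 mult_2_right)
  have XYp: "X + Y = p + p - 1" unfolding X_def Y_def by simp
  have YXq: "Y - X = q + q - 1" unfolding X_def Y_def by simp
  have sqX: "d * (X * X) = (X * X) * d" if "d * X = X * d" for d using that by (metis mult.assoc)
  have sqY: "d * (Y * Y) = (Y * Y) * d" if "d * Y = Y * d" for d using that by (metis mult.assoc)
  have XYc: "d * (Y * Y) = (Y * Y) * d" if "d * (X * X) = (X * X) * d" for d
  proof -
    have e: "Y * Y = 1 - X * X" using XY1 by (simp add: algebra_simps)
    have "d * (Y * Y) = d - d * (X * X)" unfolding e by (simp add: right_diff_distrib)
    also have "\<dots> = d - (X * X) * d" using that by simp
    also have "\<dots> = (Y * Y) * d" unfolding e by (simp add: left_diff_distrib)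
    finally show ?thesis .
  qed
  have YXc: "d * (X * X) = (X * X) * d" if "d * (Y * Y) = (Y * Y) * d" for d
  proof -
    have e: "X * X = 1 - Y * Y" using XY1 by (simp add: algebra_simps)
    have "d * (X * X) = d - d * (Y * Y)" unfolding e by (simp add: right_diff_distrib)
    also have "\<dots> = d - (Y * Y) * d" using that by simp
    also have "\<dots> = (X * X) * d" unfolding e by (simp add: left_diff_distrib)
    finally show ?thesis .
  qed
  have s_comm: "s * d = d * s" if "d \<in> A" "d * (X * X) = (X * X) * d" for d
    using CC_use[OF sp(3) that] .
  have c_comm: "c * d = d * c" if "d \<in> A" "d * (Y * Y) = (Y * Y) * d" for d
    using CC_use[OF cp(3) that] .
  have vX: "v * X = X * v" using CC_use[OF vp(3) XA] by simp
  have uY: "u * Y = Y * u" using CC_use[OF up(3) YA] by simp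
  have ccYY: "c * (Y * Y) = (Y * Y) * c" unfolding cp(2)[symmetric] by (simp add: mult.assoc)
  have sc: "s * c = c * s" using s_comm[OF cA YXc[OF ccYY]] .
  have su: "s * u = u * s" using s_comm[OF up(1) YXc[OF sqY[OF uY]]] .
  have sv: "s * v = v * s" using s_comm[OF vp(1) sqX[OF vX]] .
  have cu: "c * u = u * c" using c_comm[OF up(1) sqY[OF uY]] .
  have cv: "c * v = v * c" using c_comm[OF vp(1) XYc[OF sqX[OF vX]]] .
  note ORD = su[symmetric] sv[symmetric] cu[symmetric] cv[symmetric] sc[symmetric]
    lcomm[OF su[symmetric]] lcomm[OF sv[symmetric]] lcomm[OF cu[symmetric]] lcomm[OF cv[symmetric]]
    lcomm[OF sc[symmetric]]
  define w where "w = v * u + u * v"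
  have wA: "w \<in> A" unfolding w_def using jordanA[OF SA vp(1) up(1)] .
  have h0: "s * (c * w) = 0"
  proof -
    have "X * Y + Y * X = 0" using XYanti by simp
    then have "s * v * (c * u) + c * u * (s * v) = 0" using vp(4) up(4) by simp
    moreover have "s * v * (c * u) + c * u * (s * v) = s * (c * w)"
      unfolding w_def by (simp add: algebra_simps ORD)
    ultimately show ?thesis by simp
  qed
  have YYw: "Y * Y * w \<in> A"
  proof -
    have "c * c * w = w * (c * c)" unfolding w_def by (simp add: algebra_simps ORD)
    then show ?thesis using commA[OF SA PosA[OF SA sq[OF SA YA]] wA] cp(2) by simp
  qed
  have "X * X * (Y * Y * w) = s * (c * (s * (c * w)))"
    by (simp add: mult.assoc ORD flip: sp(2) cp(2))
  then have "X * X * (Y * Y * w) = 0" using h0 by simp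
  then have "Y * Y * w = 0" using nX YYw unfolding NNz_def[OF SA] by blast
  then have "w = 0" using nY wA unfolding NNz_def[OF SA] by (simp add: mult.assoc)
  then have vu: "v * u = - (u * v)" unfolding w_def by (simp add: eq_neg_iff_add_eq_0)
  have ccs: "c * c = 1 - s * s" using XY1 sp(2) cp(2) by (simp add: algebra_simps)
  note RC = ring_core[OF ccs up(2) vp(2) vu sc[symmetric] su[symmetric] sv[symmetric] cu[symmetric] cv[symmetric]]
  have pp: "p + p = 1 + s * v + c * u" using XYp vp(4) up(4) by (simp add: algebra_simps)
  define J where "J = s * u - c * v"
  have jJ: "j = J"
  proof -
    have "j + j = u * v * (p + p) + (p + p) * v * u" unfolding j_def by (simp add: algebra_simps)
    also have "\<dots> = J + J" unfolding pp J_def by (rule RC(1))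
    finally show ?thesis by (rule cancel2)
  qed
  have jj: "j * j = 1" unfolding jJ J_def by (rule RC(2))
  have jXY: "j * (X + Y) = - ((X + Y) * j)" unfolding jJ J_def vp(4) up(4) by (rule RC(3))
  have jp: "j * p + p * j = j"
  proof (rule cancel2)
    have "j * (p + p - 1) = - ((p + p - 1) * j)" using jXY XYp by simp
    then show "j * p + p * j + (j * p + p * j) = j + j" by (simp add: algebra_simps)
  qed
  have jp1: "j * p = (1 - p) * j" using jp by (simp add: algebra_simps)
  have jp2: "p * j = j * (1 - p)" using jp by (simp add: algebra_simps)
  have uexp: "u = s * j + c * (p + p - 1)" unfolding jJ J_def XYp[symmetric] vp(4) up(4) by (rule RC(4))
  have vexp: "v = s * (p + p - 1) - c * j" unfolding jJ J_def XYp[symmetric] vp(4) up(4) by (rule RC(5))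
  have js: "j * s = s * j" unfolding jJ J_def by (simp add: algebra_simps ORD)
  have jc: "j * c = c * j" unfolding jJ J_def by (simp add: algebra_simps ORD)
  have main: "(a * p = p * a \<and> a * q = q * a) \<longleftrightarrow>
      (\<exists>b \<in> sa_C A c. b = b * p \<and> b = p * b \<and> a = b + j * b * j)"
  proof
    assume h: "a * p = p * a \<and> a * q = q * a"
    have aX: "a * X = X * a" unfolding X_def using h by (simp add: algebra_simps)
    have aY: "a * Y = Y * a" unfolding Y_def using h by (simp add: algebra_simps)
    have av: "a * v = v * a" using CC_use[OF vp(3) aA aX] by simp
    have au: "a * u = u * a" using CC_use[OF up(3) aA aY] by simp
    have as: "a * s = s * a" using s_comm[OF aA sqX[OF aX]] by simp
    have ac: "a * c = c * a" using c_comm[OF aA sqY[OF aY]] by simp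
    have aj: "a * j = j * a" unfolding jJ J_def by (intro cm_diff cm_mult as au ac av)
    define b where "b = p * a"
    have bA: "b \<in> A" unfolding b_def using commA[OF SA pA(1) aA] h by simp
    have pp': "p * (p * z) = p * z" for z using pA(2) by (simp flip: mult.assoc)
    have qq': "q * (q * z) = q * z" for z using qA(2) by (simp flip: mult.assoc)
    have pX: "p * (X * X) = (X * X) * p" unfolding X_def using pA(2) qA(2)
      by (simp add: algebra_simps mult_2 mult_2_right pp' qq')
    have pc: "p * c = c * p" using c_comm[OF pA(1) XYc[OF pX]] by simp
    have "c * b = b * c" unfolding b_def using pc ac by (metis mult.assoc)
    then have bC: "b \<in> sa_C A c" using bA unfolding sa_C_def by simp
    have b1: "b = b * p" unfolding b_def using h pA(2) by (metis mult.assoc)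
    have b2: "b = p * b" unfolding b_def using pA(2) by (metis mult.assoc)
    have "j * b * j = (1 - p) * a"
    proof -
      have "j * b * j = (j * p) * a * j" unfolding b_def by (simp add: mult.assoc)
      also have "\<dots> = (1 - p) * (j * a * j)" unfolding jp1 by (simp add: mult.assoc)
      also have "j * a * j = a" using aj jj by (metis mult.assoc mult_1_right)
      finally show ?thesis .
    qed
    then have "a = b + j * b * j" unfolding b_def by (simp add: algebra_simps)
    then show "\<exists>b \<in> sa_C A c. b = b * p \<and> b = p * b \<and> a = b + j * b * j" using bC b1 b2 by blast
  next
    assume "\<exists>b \<in> sa_C A c. b = b * p \<and> b = p * b \<and> a = b + j * b * j"
    then obtain b where bC: "b \<in> sa_C A c" and b1: "b = b * p" and b2: "b = p * b"
      and ab: "a = b + j * b * j" by blast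
    have bA: "b \<in> A" and bc: "c * b = b * c" using bC unfolding sa_C_def by auto
    have bYY: "b * (Y * Y) = (Y * Y) * b" unfolding cp(2)[symmetric] using bc by (metis mult.assoc)
    have bs: "b * s = s * b" using s_comm[OF bA YXc[OF bYY]] by simp
    have ap1: "a * p = b"
    proof -
      have "j * b * j * p = j * (b * (1 - p)) * j" by (simp add: mult.assoc jp1)
      also have "b * (1 - p) = 0" using b1 by (simp add: algebra_simps)
      finally have "j * b * j * p = 0" by simp
      then show ?thesis unfolding ab using b1 by (simp add: algebra_simps)
    qed
    have ap2: "p * a = b"
    proof -
      have "p * (j * b * j) = j * ((1 - p) * b) * j" by (simp add: mult.assoc[symmetric] jp2)
      also have "(1 - p) * b = 0" using b2 by (simp add: algebra_simps)
      finally have "p * (j * b * j) = 0" by simp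
      then show ?thesis unfolding ab using b2 by (simp add: algebra_simps)
    qed
    have ap: "a * p = p * a" using ap1 ap2 by simp
    have "s * a = a * s" unfolding ab by (intro cm_add cm_mult) (simp_all add: bs js)
    then have as: "a * s = s * a" by simp
    have "c * a = a * c" unfolding ab by (intro cm_add cm_mult) (simp_all add: bc jc)
    then have ac: "a * c = c * a" by simp
    have aj: "a * j = j * a"
    proof -
      have "a * j = b * j + j * b * (j * j)" unfolding ab by (simp add: algebra_simps)
      also have "\<dots> = b * j + j * b" using jj by simp
      also have "\<dots> = j * b + (j * j) * b * j" using jj by simp
      also have "\<dots> = j * a" unfolding ab by (simp add: algebra_simps)
      finally show ?thesis .
    qed
    have app: "a * (p + p - 1) = (p + p - 1) * a" by (intro cm_add cm_diff ap cm_one)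
    have au: "a * u = u * a" unfolding uexp by (intro cm_add cm_mult as aj ac app)
    have av: "a * v = v * a" unfolding vexp by (intro cm_diff cm_mult as aj ac app)
    have aX: "a * X = X * a" unfolding vp(4) by (intro cm_mult as av)
    have aY: "a * Y = Y * a" unfolding up(4) by (intro cm_mult ac au)
    have "a * (q + q - 1) = (q + q - 1) * a" unfolding YXq[symmetric] by (intro cm_diff aY aX)
    then have "a * q + a * q = q * a + q * a" by (simp add: algebra_simps)
    then have "a * q = q * a" by (rule cancel2)
    then show "a * p = p * a \<and> a * q = q * a" using ap by simp
  qed
  show ?thesis unfolding Let_def cdef udef vdef j_def[symmetric] using main .
qed
end
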